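(* Let $\Sigma$ be a connected orientable surface with end space $E$, let $x\in E$, and let $H_x\subset E$ be the set of ends locally homeomorphic to $x$. Suppose that $C=\overline{H_x}$ has no isolated points (so $C$ is a Cantor set, invariant under the action of the homeomorphism group of $\Sigma$ on $E$). If $z\in C$ has orbit under the homeomorphism group of $\Sigma$ that is dense in $C$, then this orbit is comeager in $C$. In particular, there is at most one orbit of homeomorphisms of $\Sigma$ in $C$ that is dense in $C$.
   Context: For a connected orientable surface $\Sigma$, $E$ denotes its space of ends and $E^G\subset E$ the ends accumulated by genus; homeomorphisms of $\Sigma$ act on $E$. Two ends $x,x'\in E$ are locally homeomorphic if there are clopen neighborhoods $U\ni x$, $U'\ni x'$ in $E$ and a homeomorphism $(U,U\cap E^G)\to(U',U'\cap E^G)$ sending $x$ to $x'$ (equivalently, some homeomorphism of $\Sigma$ maps $x$ to $x'$). *)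

theory Defs
  imports "HOL-Analysis.Analysis"
begin

text \<open>End spaces are modelled abstractly by Richards' classification: the end space of a
connected orientable surface is a pair (E, EG) where E is a compact, metrizable,
totally disconnected space and EG (ends accumulated by genus) is a closed subset;
every such pair arises, and the action of Homeo(Sigma) on E has image exactly the
group of homeomorphisms of the pair (E, EG).\<close>

definition end_space_pair :: "'a topology \<Rightarrow> 'a set \<Rightarrow> bool" where
  "end_space_pair E EG \<longleftrightarrow>
     compact_space E \<and> metrizable_space E \<and>
     (\<forall>x\<in>topspace E. connected_component_of_set E x = {x}) \<and>
     closedin E EG"

definition clopenin :: "'a topology \<Rightarrow> 'a set \<Rightarrow> bool" where
  "clopenin E U \<longleftrightarrow> openin E U \<and> closedin E U"

definition pair_homeo :: "'a topology \<Rightarrow> 'a set \<Rightarrow> ('a \<Rightarrow> 'a) \<Rightarrow> bool" where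
  "pair_homeo E EG h \<longleftrightarrow> homeomorphic_map E E h \<and> h ` EG = EG"

definition end_orbit :: "'a topology \<Rightarrow> 'a set \<Rightarrow> 'a \<Rightarrow> 'a set" where
  "end_orbit E EG z = {h z | h. pair_homeo E EG h}"

definition loc_homeo :: "'a topology \<Rightarrow> 'a set \<Rightarrow> 'a \<Rightarrow> 'a \<Rightarrow> bool" where
  "loc_homeo E EG x x' \<longleftrightarrow>
     (\<exists>U U' f. clopenin E U \<and> clopenin E U' \<and> x \<in> U \<and> x' \<in> U' \<and>
        homeomorphic_map (subtopology E U) (subtopology E U') f \<and>
        f ` (U \<inter> EG) = U' \<inter> EG \<and> f x = x')"

definition H_set :: "'a topology \<Rightarrow> 'a set \<Rightarrow> 'a \<Rightarrow> 'a set" where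
  "H_set E EG x = {x' \<in> topspace E. loc_homeo E EG x x'}"

definition comeager_in :: "'a topology \<Rightarrow> 'a set \<Rightarrow> bool" where
  "comeager_in X S \<longleftrightarrow>
     (\<exists>D :: nat \<Rightarrow> 'a set. (\<forall>n. openin X (D n) \<and> X closure_of (D n) = topspace X) \<and>
        (\<Inter>n. D n) \<subseteq> S)"

end

theory Submission
  imports Defs
begin


lemma clopen_base:
  assumes "compact_space E" "Hausdorff_space E"
    and comp: "\<forall>x\<in>topspace E. connected_component_of_set E x = {x}"
    and "openin E Op" "x \<in> Op"
  shows "\<exists>U. clopenin E U \<and> x \<in> U \<and> U \<subseteq> Op"
proof -
  have xE: "x \<in> topspace E" using assms(4,5) openin_subset by blast
  have Q: "quasi_component_of_set E x \<in> quasi_components_of E"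
    using xE by (simp add: quasi_component_in_quasi_components_of)
  have "compactin E (quasi_component_of_set E x)"
    by (rule closedin_compact_space[OF assms(1) closedin_quasi_component_of])
  then have "quasi_component_of_set E x \<in> connected_components_of E"
    using compact_quasi_eq_connected_components_of[OF compact_imp_locally_compact_space[OF assms(1)] assms(2)] Q
    by simp
  then obtain y where y: "y \<in> topspace E" "quasi_component_of_set E x = connected_component_of_set E y"
    unfolding connected_components_of_def by auto
  have "connected_component_of_set E y = {y}" using comp y(1) by simp
  then have "quasi_component_of_set E x = {y}" using y(2) by simp
  moreover have "x \<in> quasi_component_of_set E x" using xE by simp
  ultimately have qx: "quasi_component_of_set E x = {x}" by simp
  have K: "compactin E (topspace E - Op)"
    by (rule closedin_compact_space[OF assms(1)]) (simp add: assms(4) closedin_diff)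
  have "disjnt (quasi_component_of_set E x) (topspace E - Op)"
    using qx assms(5) by simp
  then have "separated_between E (quasi_component_of_set E x) (topspace E - Op)"
    using separated_between_quasi_component_compact[OF Q K] by simp
  then obtain U V where UV: "openin E U" "openin E V" "U \<union> V = topspace E" "disjnt U V" "x \<in> U" "topspace E - Op \<subseteq> V"
    unfolding separated_between_def qx by auto
  have "U = topspace E - V" using UV by (auto simp: disjnt_iff)
  then have "closedin E U" using UV(2) by (simp add: closedin_diff)
  moreover have "U \<subseteq> Op" using UV by (auto simp: disjnt_iff)
  ultimately show ?thesis using UV unfolding clopenin_def by auto
qed
lemma compact_metrizable_second_countable:
  assumes "compact_space E" "metrizable_space E"
  shows "second_countable E"
proof -
  obtain M d where Md: "Metric_space M d" "E = Metric_space.mtopology M d"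
    using assms(2) unfolding metrizable_space_def by auto
  interpret Metric_space M d by fact
  have top: "topspace E = M" using Md by simp
  have ex: "\<forall>n::nat. \<exists>F. finite F \<and> F \<subseteq> (\<lambda>c. mball c (1 / real (Suc n))) ` M \<and> M \<subseteq> \<Union>F"
  proof
    fix n :: nat
    let ?U = "(\<lambda>c. mball c (1 / real (Suc n))) ` M"
    have "\<forall>B\<in>?U. openin E B" using Md by auto
    moreover have "topspace E \<subseteq> \<Union>?U"
    proof
      fix w assume w: "w \<in> topspace E"
      then have "w \<in> mball w (1 / real (Suc n))" using top by simp
      then show "w \<in> \<Union>?U" using top w by auto
    qed
    moreover have "compactin E (topspace E)" using assms(1) by (simp add: compact_space_def)
    ultimately obtain F where "finite F" "F \<subseteq> ?U" "topspace E \<subseteq> \<Union>F"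
      unfolding compactin_def by meson
    then show "\<exists>F. finite F \<and> F \<subseteq> ?U \<and> M \<subseteq> \<Union>F"
      using top by auto
  qed
  obtain F where F: "\<forall>n. finite (F n) \<and> F n \<subseteq> (\<lambda>c. mball c (1 / real (Suc n))) ` M \<and> M \<subseteq> \<Union>(F n)"
    using choice[OF ex] by auto
  define B where "B = (\<Union>n. F n)"
  have "countable B" unfolding B_def using F by (simp add: countable_finite)
  moreover have "\<forall>V\<in>B. openin E V" unfolding B_def using F Md by fastforce
  moreover have "\<forall>U x. openin E U \<and> x \<in> U \<longrightarrow> (\<exists>V\<in>B. x \<in> V \<and> V \<subseteq> U)"
  proof (intro allI impI)
    fix U x assume Ux: "openin E U \<and> x \<in> U"
    then have "U \<subseteq> M \<and> (\<forall>x. x \<in> U \<longrightarrow> (\<exists>r>0. mball x r \<subseteq> U))"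
      using Md openin_mtopology by simp
    then have xM: "x \<in> M" using Ux by auto
    obtain r where r: "r > 0" "mball x r \<subseteq> U"
      using \<open>U \<subseteq> M \<and> _\<close> Ux by blast
    obtain n :: nat where n00: "inverse (real (Suc n)) < r / 2"
      using reals_Archimedean[of "r/2"] r(1) by auto
    have n0: "1 / real (Suc n) < r / 2" using n00 by (simp add: inverse_eq_divide)
    have "2 / real (Suc n) = 2 * (1 / real (Suc n))" by simp
    then have n: "2 / real (Suc n) < r" using n0 by linarith
    obtain V where V: "V \<in> F n" "x \<in> V" using F xM by blast
    then obtain c where c: "c \<in> M" "V = mball c (1 / real (Suc n))" using F by blast
    have "V \<subseteq> mball x r"
    proof
      fix w assume "w \<in> V"
      then have wM: "w \<in> M" and cw: "d c w < 1 / real (Suc n)" using c by auto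
      have cx: "d c x < 1 / real (Suc n)" using V c by auto
      have "d x w \<le> d x c + d c w" using triangle[OF xM c(1) wM] .
      also have "d x c = d c x" by (rule commute)
      finally have "d x w < r" using cx cw n by simp
      then show "w \<in> mball x r" using wM xM by simp
    qed
    then show "\<exists>V\<in>B. x \<in> V \<and> V \<subseteq> U" using V r unfolding B_def by blast
  qed
  ultimately show ?thesis unfolding second_countable_def by blast
qed

lemma countable_clopens:
  assumes "compact_space E" "second_countable E"
  shows "countable {U. clopenin E U}"
proof -
  obtain B where B: "countable B" "\<forall>V\<in>B. openin E V"
    "\<forall>U x. openin E U \<and> x \<in> U \<longrightarrow> (\<exists>V\<in>B. x \<in> V \<and> V \<subseteq> U)"
    using assms(2) unfolding second_countable_def by blast
  have "{U. clopenin E U} \<subseteq> Union ` {G. finite G \<and> G \<subseteq> B}"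
  proof
    fix U assume "U \<in> {U. clopenin E U}"
    then have U: "openin E U" "closedin E U" unfolding clopenin_def by auto
    have cU: "compactin E U" by (rule closedin_compact_space[OF assms(1) U(2)])
    let ?G = "{V\<in>B. V \<subseteq> U}"
    have "U \<subseteq> \<Union>?G" using B(3) U(1) by blast
    moreover have "\<forall>V\<in>?G. openin E V" using B by auto
    ultimately obtain G where G: "finite G" "G \<subseteq> ?G" "U \<subseteq> \<Union>G"
      using cU unfolding compactin_def by meson
    then have "U = \<Union>G" by auto
    then show "U \<in> Union ` {G. finite G \<and> G \<subseteq> B}" using G by blast
  qed
  moreover have "countable (Union ` {G. finite G \<and> G \<subseteq> B})"
    using B(1) by (simp add: countable_Collect_finite_subset)
  ultimately show ?thesis by (rule countable_subset)
qed




definition lph :: "'a topology \<Rightarrow> 'a set \<Rightarrow> 'a set \<Rightarrow> 'a set \<Rightarrow> ('a \<Rightarrow> 'a) \<Rightarrow> bool" where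
  "lph E EG V W f \<longleftrightarrow> homeomorphic_map (subtopology E V) (subtopology E W) f \<and> f ` (V \<inter> EG) = W \<inter> EG"

lemma clopen_sub: "clopenin E U \<Longrightarrow> U \<subseteq> topspace E"
  unfolding clopenin_def by (simp add: openin_subset)

lemma top_sub: "U \<subseteq> topspace E \<Longrightarrow> topspace (subtopology E U) = U"
  by auto

lemma clopen_Int: "clopenin E A \<Longrightarrow> clopenin E B \<Longrightarrow> clopenin E (A \<inter> B)"
  unfolding clopenin_def by auto

lemma clopen_diff: "clopenin E A \<Longrightarrow> clopenin E B \<Longrightarrow> clopenin E (A - B)"
  unfolding clopenin_def by (auto intro: openin_diff closedin_diff)

lemma clopen_top: "clopenin E (topspace E)"
  unfolding clopenin_def by auto

lemma ph_id: "closedin E EG \<Longrightarrow> pair_homeo E EG id"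
  unfolding pair_homeo_def by simp

lemma ph_comp: "pair_homeo E EG f \<Longrightarrow> pair_homeo E EG g \<Longrightarrow> pair_homeo E EG (f \<circ> g)"
proof -
  assume a: "pair_homeo E EG f" "pair_homeo E EG g"
  have "homeomorphic_map E E (f \<circ> g)" using homeomorphic_map_compose[of E E g E f] a
    unfolding pair_homeo_def by auto
  moreover have "(f \<circ> g) ` EG = f ` (g ` EG)" by (rule image_comp[symmetric])
  ultimately show ?thesis using a unfolding pair_homeo_def by simp
qed

lemma ph_inv:
  assumes "pair_homeo E EG f" "EG \<subseteq> topspace E"
  shows "\<exists>g. pair_homeo E EG g \<and> (\<forall>p\<in>topspace E. g (f p) = p \<and> f (g p) = p)"
proof -
  obtain g where g: "homeomorphic_maps E E f g"
    using assms(1) unfolding pair_homeo_def homeomorphic_map_maps by auto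
  then have gm: "homeomorphic_map E E g" and inv: "\<forall>p\<in>topspace E. g (f p) = p" "\<forall>p\<in>topspace E. f (g p) = p"
    unfolding homeomorphic_maps_map by auto
  have "f ` EG = EG" using assms(1) unfolding pair_homeo_def by auto
  then have "g ` EG = g ` (f ` EG)" by simp
  also have "\<dots> = EG"
  proof -
    have "\<forall>p\<in>EG. g (f p) = p" using inv assms(2) by auto
    then show ?thesis by (simp add: image_image)
  qed
  finally show ?thesis using gm inv unfolding pair_homeo_def by auto
qed

lemma orbit_self:
  assumes "closedin E EG" shows "z \<in> end_orbit E EG z"
proof -
  have "z = id z" by simp
  then show ?thesis unfolding end_orbit_def using ph_id[OF assms] by blast
qed

lemma orbit_trans:
  assumes "closedin E EG" "y \<in> end_orbit E EG z"
  shows "end_orbit E EG y \<subseteq> end_orbit E EG z"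
proof
  fix w assume "w \<in> end_orbit E EG y"
  then obtain h where h: "pair_homeo E EG h" "w = h y" unfolding end_orbit_def by auto
  obtain g where g: "pair_homeo E EG g" "y = g z" using assms(2) unfolding end_orbit_def by auto
  have "pair_homeo E EG (h \<circ> g)" using ph_comp[OF h(1) g(1)] .
  moreover have "w = (h \<circ> g) z" using h g by simp
  ultimately show "w \<in> end_orbit E EG z" unfolding end_orbit_def by blast
qed

lemma orbit_sym:
  assumes "closedin E EG" "y \<in> end_orbit E EG z" "z \<in> topspace E"
  shows "z \<in> end_orbit E EG y"
proof -
  obtain g where g: "pair_homeo E EG g" "y = g z" using assms(2) unfolding end_orbit_def by auto
  obtain h where h: "pair_homeo E EG h" "\<forall>p\<in>topspace E. h (g p) = p \<and> g (h p) = p"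
    using ph_inv[OF g(1) closedin_subset[OF assms(1)]] by auto
  have "z = h y" using h(2) g(2) assms(3) by simp
  then show ?thesis unfolding end_orbit_def using h(1) by blast
qed

lemma orbit_eq:
  assumes "closedin E EG" "y \<in> end_orbit E EG z" "z \<in> topspace E"
  shows "end_orbit E EG y = end_orbit E EG z"
  using orbit_trans[OF assms(1,2)] orbit_trans[OF assms(1) orbit_sym[OF assms]] by blast

lemma pre_open:
  assumes "continuous_map (subtopology E U) (subtopology E U') f" "openin E U" "openin E Op"
  shows "openin E {p\<in>U. f p \<in> Op}"
proof -
  have "continuous_map (subtopology E U) E f" using continuous_map_into_fulltopology[OF assms(1)] .
  then have "openin (subtopology E U) {p \<in> topspace (subtopology E U). f p \<in> Op}"
    using assms(3) unfolding continuous_map by auto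
  moreover have "{p \<in> topspace (subtopology E U). f p \<in> Op} = {p\<in>U. f p \<in> Op}"
    using assms(2) openin_subset by auto
  ultimately have "openin (subtopology E U) {p\<in>U. f p \<in> Op}" by simp
  then show ?thesis using openin_trans_full assms(2) by blast
qed

lemma pre_clopen:
  assumes "continuous_map (subtopology E U) (subtopology E U') f" "clopenin E U" "clopenin E K"
  shows "clopenin E {p\<in>U. f p \<in> K}"
proof -
  have oU: "openin E U" and oK: "openin E K" and cK: "closedin E K" using assms(2,3) unfolding clopenin_def by auto
  have oK2: "openin E (topspace E - K)" using cK by (simp add: openin_diff)
  have o: "openin E {p\<in>U. f p \<in> K}" by (rule pre_open[OF assms(1) oU oK])
  have o2: "openin E {p\<in>U. f p \<in> topspace E - K}" by (rule pre_open[OF assms(1) oU oK2])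
  have Us: "U \<subseteq> topspace E" using clopen_sub[OF assms(2)] .
  have "\<forall>p\<in>U. f p \<in> topspace E"
  proof
    fix p assume "p \<in> U"
    then have "p \<in> topspace (subtopology E U)" using Us by auto
    then have "f p \<in> topspace (subtopology E U')" using assms(1) unfolding continuous_map by auto
    then show "f p \<in> topspace E" by auto
  qed
  then have "{p\<in>U. f p \<in> K} = U - {p\<in>U. f p \<in> topspace E - K}" by auto
  then have "closedin E {p\<in>U. f p \<in> K}" using o2 assms(2) unfolding clopenin_def by (simp add: closedin_diff)
  then show ?thesis using o unfolding clopenin_def by auto
qed

lemma img_clopen:
  assumes "homeomorphic_map (subtopology E V) (subtopology E W) f" "clopenin E V" "clopenin E W"
    "clopenin E V'" "V' \<subseteq> V"
  shows "clopenin E (f ` V')"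
proof -
  obtain g where g: "homeomorphic_maps (subtopology E V) (subtopology E W) f g"
    using assms(1) unfolding homeomorphic_map_maps by blast
  have Vs: "V \<subseteq> topspace E" "W \<subseteq> topspace E" using clopen_sub assms(2,3) by auto
  have gc: "continuous_map (subtopology E W) (subtopology E V) g"
    and inv1: "\<forall>p\<in>V. g (f p) = p" and inv2: "\<forall>q\<in>W. f (g q) = q"
    using g Vs unfolding homeomorphic_maps_def by (auto simp: Int_absorb1)
  have fV: "f ` V = W" using homeomorphic_imp_surjective_map[OF assms(1)] Vs by (simp add: Int_absorb1)
  have gW: "\<forall>q\<in>W. g q \<in> V"
  proof
    fix q assume "q \<in> W"
    then have "q \<in> topspace (subtopology E W)" using Vs by auto
    then have "g q \<in> topspace (subtopology E V)" using gc unfolding continuous_map by auto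
    then show "g q \<in> V" by auto
  qed
  have "f ` V' = {q\<in>W. g q \<in> V'}"
  proof
    show "f ` V' \<subseteq> {q\<in>W. g q \<in> V'}" using inv1 fV assms(5) by auto
    show "{q\<in>W. g q \<in> V'} \<subseteq> f ` V'"
    proof
      fix q assume "q \<in> {q\<in>W. g q \<in> V'}"
      then have "q = f (g q)" "g q \<in> V'" using inv2 by auto
      then show "q \<in> f ` V'" by blast
    qed
  qed
  then show ?thesis using pre_clopen[OF gc assms(3,4)] by simp
qed

lemma lph_restrict:
  assumes "lph E EG V W f" "V' \<subseteq> V" "V \<subseteq> topspace E" "W \<subseteq> topspace E"
  shows "lph E EG V' (f ` V') f"
proof -
  have hm: "homeomorphic_map (subtopology E V) (subtopology E W) f" and eg: "f ` (V \<inter> EG) = W \<inter> EG"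
    using assms(1) unfolding lph_def by auto
  have fV: "f ` V = W" using homeomorphic_imp_surjective_map[OF hm] assms(3,4) by (simp add: Int_absorb1)
  have inj: "inj_on f V" using homeomorphic_imp_injective_map[OF hm] assms(3) by (simp add: Int_absorb1)
  have "f ` (topspace (subtopology E V) \<inter> V') = topspace (subtopology E W) \<inter> f ` V'"
    using assms fV by auto
  then have "homeomorphic_map (subtopology (subtopology E V) V') (subtopology (subtopology E W) (f ` V')) f"
    using homeomorphic_map_subtopologies[OF hm] by blast
  moreover have "V \<inter> V' = V'" "W \<inter> f ` V' = f ` V'" using assms(2) fV by auto
  ultimately have "homeomorphic_map (subtopology E V') (subtopology E (f ` V')) f"
    by (simp add: subtopology_subtopology)
  moreover have "f ` (V' \<inter> EG) = f ` V' \<inter> EG"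
  proof
    show "f ` (V' \<inter> EG) \<subseteq> f ` V' \<inter> EG" using eg assms(2) by auto
    show "f ` V' \<inter> EG \<subseteq> f ` (V' \<inter> EG)"
    proof
      fix q assume q: "q \<in> f ` V' \<inter> EG"
      then obtain p where p: "p \<in> V'" "q = f p" by auto
      have "q \<in> W \<inter> EG" using q fV assms(2) by auto
      then obtain p' where p': "p' \<in> V \<inter> EG" "q = f p'" using eg by (metis imageE)
      have "p = p'" using inj p p' assms(2) by (auto simp: inj_on_def)
      then show "q \<in> f ` (V' \<inter> EG)" using p p' by auto
    qed
  qed
  ultimately show ?thesis unfolding lph_def by auto
qed

lemma lph_EG_iff:
  assumes "lph E EG V W f" "p \<in> V" "V \<subseteq> topspace E" "W \<subseteq> topspace E"
  shows "f p \<in> EG \<longleftrightarrow> p \<in> EG"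
proof -
  have "{p} \<subseteq> V" using assms(2) by simp
  then have "lph E EG {p} (f ` {p}) f" using lph_restrict[OF assms(1) _ assms(3,4)] by blast
  then have "f ` ({p} \<inter> EG) = {f p} \<inter> EG" unfolding lph_def by auto
  then show ?thesis by (cases "p \<in> EG") auto
qed

lemma lph_of_ph:
  assumes "pair_homeo E EG h" "h ` V = V" "V \<subseteq> topspace E" "EG \<subseteq> topspace E"
  shows "lph E EG V V h"
proof -
  have hm: "homeomorphic_map E E h" and eg: "h ` EG = EG" using assms(1) unfolding pair_homeo_def by auto
  have "h ` (topspace E \<inter> V) = topspace E \<inter> V" using assms(2,3) by (simp add: Int_absorb1)
  then have "homeomorphic_map (subtopology E V) (subtopology E V) h"
    using homeomorphic_map_subtopologies[OF hm] by blast
  moreover have inj: "inj_on h (topspace E)" using homeomorphic_imp_injective_map[OF hm] .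
  have "h ` (V \<inter> EG) = V \<inter> EG"
  proof -
    have "EG \<subseteq> topspace E" by (rule assms(4))
    then have "h ` (V \<inter> EG) = h ` V \<inter> h ` EG" using inj assms(3) by (auto simp: inj_on_def)
    then show ?thesis using assms(2) eg by simp
  qed
  ultimately show ?thesis unfolding lph_def by auto
qed

lemma lph_comp:
  assumes "lph E EG V W f" "lph E EG W X g"
  shows "lph E EG V X (g \<circ> f)"
proof -
  have "homeomorphic_map (subtopology E V) (subtopology E X) (g \<circ> f)"
    using assms homeomorphic_map_compose unfolding lph_def by blast
  moreover have "(g \<circ> f) ` (V \<inter> EG) = g ` (f ` (V \<inter> EG))" by (rule image_comp[symmetric])
  ultimately show ?thesis using assms unfolding lph_def by simp
qed

lemma lph_id: "lph E EG V V id"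
  unfolding lph_def by simp




locale EB =
  fixes E :: "'a topology" and EG :: "'a set"
  assumes cpt: "compact_space E" and hd: "Hausdorff_space E" and EGc: "closedin E EG"
    and zb: "\<And>Op x. openin E Op \<Longrightarrow> x \<in> Op \<Longrightarrow> \<exists>U. clopenin E U \<and> x \<in> U \<and> U \<subseteq> Op"
begin

lemma EGs: "EG \<subseteq> topspace E" using EGc closedin_subset by auto

lemma swap:
  assumes f: "lph E EG U U' f" and cU: "clopenin E U" "clopenin E U'"
    and cR: "clopenin E R" "R \<subseteq> U" and dj: "f ` R \<inter> R = {}"
  shows "\<exists>\<sigma>. pair_homeo E EG \<sigma> \<and> (\<forall>p\<in>R. \<sigma> p = f p) \<and> (\<forall>p\<in>f ` R. \<sigma> p \<in> R)
     \<and> (\<forall>p. p \<notin> R \<and> p \<notin> f ` R \<longrightarrow> \<sigma> p = p) \<and> (\<forall>p\<in>topspace E. \<sigma> (\<sigma> p) = p)"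
proof -
  have hm: "homeomorphic_map (subtopology E U) (subtopology E U') f" using f unfolding lph_def by auto
  obtain g where g: "homeomorphic_maps (subtopology E U) (subtopology E U') f g"
    using hm unfolding homeomorphic_map_maps by blast
  have Us: "U \<subseteq> topspace E" "U' \<subseteq> topspace E" using clopen_sub cU by auto
  have fc: "continuous_map (subtopology E U) (subtopology E U') f"
    and gc: "continuous_map (subtopology E U') (subtopology E U) g"
    and gf: "\<forall>p\<in>U. g (f p) = p" and fg: "\<forall>q\<in>U'. f (g q) = q"
    using g Us unfolding homeomorphic_maps_def by (auto simp: Int_absorb1)
  have fV: "f ` U = U'" using homeomorphic_imp_surjective_map[OF hm] Us by (simp add: Int_absorb1)
  have gU: "\<forall>q\<in>U'. g q \<in> U"
  proof
    fix q assume "q \<in> U'"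
    then have "q \<in> topspace (subtopology E U')" using Us by auto
    then have "g q \<in> topspace (subtopology E U)" using gc unfolding continuous_map by auto
    then show "g q \<in> U" by auto
  qed
  define fR where "fR = f ` R"
  have fRs: "fR \<subseteq> U'" using fV cR(2) fR_def by auto
  have cfR: "clopenin E fR" unfolding fR_def by (rule img_clopen[OF hm cU cR])
  have dj2: "fR \<inter> R = {}" using dj fR_def by simp
  define \<sigma> where "\<sigma> = (\<lambda>p. if p \<in> R then f p else if p \<in> fR then g p else p)"
  have gfR: "\<forall>q\<in>fR. g q \<in> R"
  proof
    fix q assume "q \<in> fR"
    then obtain r where "r \<in> R" "q = f r" unfolding fR_def by auto
    then show "g q \<in> R" using gf cR(2) by auto
  qed
  have inv: "\<forall>p\<in>topspace E. \<sigma> (\<sigma> p) = p"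
  proof
    fix p assume "p \<in> topspace E"
    show "\<sigma> (\<sigma> p) = p"
    proof (cases "p \<in> R")
      case True
      then have "f p \<in> fR" "f p \<notin> R" using fR_def dj2 by auto
      then show ?thesis using True gf cR(2) unfolding \<sigma>_def by auto
    next
      case False
      show ?thesis
      proof (cases "p \<in> fR")
        case True
        then have "g p \<in> R" using gfR by auto
        then show ?thesis using True False fg fRs unfolding \<sigma>_def by auto
      qed (use False in \<open>auto simp: \<sigma>_def\<close>)
    qed
  qed
  have into: "\<forall>p\<in>topspace E. \<sigma> p \<in> topspace E"
  proof
    fix p assume p: "p \<in> topspace E"
    have "p \<in> R \<Longrightarrow> f p \<in> topspace E" using fV cR(2) Us by auto
    moreover have "p \<in> fR \<Longrightarrow> g p \<in> topspace E" using gfR cR(2) Us by auto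
    ultimately show "\<sigma> p \<in> topspace E" using p unfolding \<sigma>_def by auto
  qed
  have cont: "continuous_map E E \<sigma>"
    unfolding continuous_map
  proof (intro conjI allI impI)
    show "\<sigma> ` topspace E \<subseteq> topspace E" using into by auto
    fix Op assume oO: "openin E Op"
    have eq: "{p \<in> topspace E. \<sigma> p \<in> Op} = (R \<inter> {p\<in>U. f p \<in> Op}) \<union> (fR \<inter> {q\<in>U'. g q \<in> Op})
       \<union> ((topspace E - R - fR) \<inter> Op)"
    proof
      show "{p \<in> topspace E. \<sigma> p \<in> Op} \<subseteq> (R \<inter> {p\<in>U. f p \<in> Op}) \<union> (fR \<inter> {q\<in>U'. g q \<in> Op})
       \<union> ((topspace E - R - fR) \<inter> Op)"
        using cR(2) fRs unfolding \<sigma>_def by auto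
      show "(R \<inter> {p\<in>U. f p \<in> Op}) \<union> (fR \<inter> {q\<in>U'. g q \<in> Op})
       \<union> ((topspace E - R - fR) \<inter> Op) \<subseteq> {p \<in> topspace E. \<sigma> p \<in> Op}"
        using dj2 cR(2) fRs Us unfolding \<sigma>_def by auto
    qed
    have o1: "openin E (R \<inter> {p\<in>U. f p \<in> Op})"
      using pre_open[OF fc _ oO] cU cR unfolding clopenin_def by auto
    have o2: "openin E (fR \<inter> {q\<in>U'. g q \<in> Op})"
      using pre_open[OF gc _ oO] cU cfR unfolding clopenin_def by auto
    have o3: "openin E (topspace E - R - fR)"
      using cR cfR unfolding clopenin_def by (simp add: openin_diff closedin_Un Diff_Un[symmetric] del: Diff_Un)
    have "openin E ((topspace E - R - fR) \<inter> Op)" using o3 oO by auto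
    then show "openin E {p \<in> topspace E. \<sigma> p \<in> Op}" unfolding eq using o1 o2 by auto
  qed
  have hom: "homeomorphic_map E E \<sigma>"
    unfolding homeomorphic_map_maps homeomorphic_maps_def using cont inv by blast
  have EGi: "\<forall>p\<in>EG. \<sigma> p \<in> EG"
  proof
    fix p assume pE: "p \<in> EG"
    show "\<sigma> p \<in> EG"
    proof (cases "p \<in> R")
      case True
      then show ?thesis using lph_EG_iff[OF f _ Us] pE cR(2) unfolding \<sigma>_def by auto
    next
      case False
      show ?thesis
      proof (cases "p \<in> fR")
        case True
        then obtain r where r: "r \<in> R" "p = f r" unfolding fR_def by auto
        then have "g p = r" using gf cR(2) by auto
        moreover have "r \<in> EG" using lph_EG_iff[OF f _ Us, of r] r pE cR(2) by auto
        ultimately show ?thesis using True False unfolding \<sigma>_def by auto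
      qed (use False pE in \<open>auto simp: \<sigma>_def\<close>)
    qed
  qed
  have "\<sigma> ` EG = EG"
  proof
    show "\<sigma> ` EG \<subseteq> EG" using EGi by auto
    show "EG \<subseteq> \<sigma> ` EG"
    proof
      fix p assume "p \<in> EG"
      then have "p = \<sigma> (\<sigma> p)" "\<sigma> p \<in> EG" using inv EGs EGi by auto
      then show "p \<in> \<sigma> ` EG" by blast
    qed
  qed
  then have "pair_homeo E EG \<sigma>" using hom unfolding pair_homeo_def by auto
  moreover have "\<forall>p\<in>R. \<sigma> p = f p" unfolding \<sigma>_def by auto
  moreover have "\<forall>p\<in>f ` R. \<sigma> p \<in> R" using gfR dj2 unfolding \<sigma>_def fR_def by auto
  moreover have "\<forall>p. p \<notin> R \<and> p \<notin> f ` R \<longrightarrow> \<sigma> p = p" unfolding \<sigma>_def fR_def by auto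
  ultimately show ?thesis using inv by blast
qed

lemma swap_point:
  assumes f: "lph E EG U U' f" and cU: "clopenin E U" "clopenin E U'"
    and a: "a \<in> U" and cS: "clopenin E S" "a \<in> S" "f a \<in> S"
  shows "\<exists>\<sigma>. pair_homeo E EG \<sigma> \<and> \<sigma> a = f a \<and> \<sigma> ` S = S"
proof (cases "f a = a")
  case True
  then show ?thesis using ph_id[OF EGc] by auto
next
  case False
  have hm: "homeomorphic_map (subtopology E U) (subtopology E U') f" using f unfolding lph_def by auto
  have fc: "continuous_map (subtopology E U) (subtopology E U') f"
    using hm by (rule homeomorphic_imp_continuous_map)
  have Us: "U \<subseteq> topspace E" "U' \<subseteq> topspace E" "S \<subseteq> topspace E" using clopen_sub cU cS by auto
  have fV: "f ` U = U'" using homeomorphic_imp_surjective_map[OF hm] Us by (simp add: Int_absorb1)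
  have aE: "a \<in> topspace E" "f a \<in> topspace E" using a fV Us by auto
  obtain O1 O2 where O: "openin E O1" "openin E O2" "a \<in> O1" "f a \<in> O2" "disjnt O1 O2"
    using hd aE False unfolding Hausdorff_space_def by metis
  obtain R1 where R1: "clopenin E R1" "a \<in> R1" "R1 \<subseteq> O1" using zb[OF O(1,3)] by blast
  obtain R2 where R2: "clopenin E R2" "f a \<in> R2" "R2 \<subseteq> O2" using zb[OF O(2,4)] by blast
  define R where "R = R1 \<inter> S \<inter> {p\<in>U. f p \<in> R2 \<inter> S}"
  have cR: "clopenin E R" unfolding R_def
    using clopen_Int[OF clopen_Int[OF R1(1) cS(1)] pre_clopen[OF fc cU(1) clopen_Int[OF R2(1) cS(1)]]] .
  have RU: "R \<subseteq> U" unfolding R_def by auto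
  have fRs: "f ` R \<subseteq> R2 \<inter> S" unfolding R_def by auto
  have dj: "f ` R \<inter> R = {}" using fRs R1(3) R2(3) O(5) unfolding R_def disjnt_def by auto
  have aR: "a \<in> R" unfolding R_def using a R1 R2 cS by auto
  obtain \<sigma> where s: "pair_homeo E EG \<sigma>" "\<forall>p\<in>R. \<sigma> p = f p" "\<forall>p\<in>f ` R. \<sigma> p \<in> R"
     "\<forall>p. p \<notin> R \<and> p \<notin> f ` R \<longrightarrow> \<sigma> p = p" "\<forall>p\<in>topspace E. \<sigma> (\<sigma> p) = p"
    using swap[OF f cU cR RU dj] by blast
  have RS: "R \<subseteq> S" "f ` R \<subseteq> S" using fRs unfolding R_def by auto
  have sub: "\<sigma> ` S \<subseteq> S"
  proof
    fix q assume "q \<in> \<sigma> ` S"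
    then obtain p where p: "p \<in> S" "q = \<sigma> p" by auto
    show "q \<in> S"
    proof (cases "p \<in> R")
      case True then show ?thesis using p s(2) RS by auto
    next
      case False
      show ?thesis
      proof (cases "p \<in> f ` R")
        case True then show ?thesis using p s(3) RS by auto
      qed (use False p s(4) in auto)
    qed
  qed
  have "S \<subseteq> \<sigma> ` S"
  proof
    fix p assume "p \<in> S"
    then have "p = \<sigma> (\<sigma> p)" "\<sigma> p \<in> S" using s(5) Us sub by auto
    then show "p \<in> \<sigma> ` S" by blast
  qed
  then show ?thesis using sub s(1,2) aR by auto
qed

lemma loc_orbit:
  assumes f: "lph E EG U U' f" and cU: "clopenin E U" "clopenin E U'" and a: "a \<in> U"
  shows "f a \<in> end_orbit E EG a"
proof -
  have hm: "homeomorphic_map (subtopology E U) (subtopology E U') f" using f unfolding lph_def by auto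
  have Us: "U \<subseteq> topspace E" "U' \<subseteq> topspace E" using clopen_sub cU by auto
  have fV: "f ` U = U'" using homeomorphic_imp_surjective_map[OF hm] Us by (simp add: Int_absorb1)
  have "f a \<in> topspace E" "a \<in> topspace E" using a fV Us by auto
  then obtain \<sigma> where "pair_homeo E EG \<sigma>" "\<sigma> a = f a"
    using swap_point[OF f cU a clopen_top] by blast
  then have "\<exists>h. f a = h a \<and> pair_homeo E EG h" by metis
  then show ?thesis unfolding end_orbit_def by simp
qed

end



locale EZ = EB +
  fixes cl :: "nat \<Rightarrow> 'a set" and z :: 'a and C :: "'a set"
  assumes cl_clopen: "\<And>i. clopenin E (cl i)" and cl_all: "\<And>U. clopenin E U \<Longrightarrow> \<exists>i. cl i = U"
    and zC: "z \<in> C" and Cs: "C \<subseteq> topspace E"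
    and dens: "\<And>p N. p \<in> C \<Longrightarrow> openin E N \<Longrightarrow> p \<in> N \<Longrightarrow> \<exists>q. q \<in> end_orbit E EG z \<and> q \<in> C \<and> q \<in> N"
begin

definition refined :: "nat \<Rightarrow> 'a set \<Rightarrow> bool" where
  "refined j S \<longleftrightarrow> (\<forall>i<j. S \<subseteq> cl i \<or> S \<inter> cl i = {})"

definition trn :: "nat \<Rightarrow> 'a set \<Rightarrow> 'a set \<Rightarrow> 'a set \<Rightarrow> 'a set \<Rightarrow> bool" where
  "trn j V W V' W' \<longleftrightarrow> clopenin E V' \<and> clopenin E W' \<and> z \<in> V' \<and> V' \<subseteq> V \<and> W' \<subseteq> W
     \<and> refined j V' \<and> refined j W' \<and> (\<exists>\<phi>. lph E EG V W \<phi> \<and> \<phi> ` V' = W')"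

definition valid :: "'a set \<Rightarrow> 'a set \<Rightarrow> bool" where
  "valid V W \<longleftrightarrow> clopenin E V \<and> clopenin E W \<and> z \<in> V \<and> (\<exists>\<phi>. lph E EG V W \<phi>)"

definition Dset :: "'a set \<Rightarrow> 'a set \<Rightarrow> nat \<Rightarrow> 'a set" where
  "Dset V W j = (if valid V W then C \<inter> ((topspace E - W) \<union> \<Union>{W'. \<exists>V'. trn j V W V' W'}) else C)"

lemma zE: "z \<in> topspace E" using zC Cs by auto

lemma refined_mono: "refined j S \<Longrightarrow> S' \<subseteq> S \<Longrightarrow> refined j S'"
  unfolding refined_def by blast

lemma refine_exists:
  assumes "p \<in> topspace E"
  shows "\<exists>R. clopenin E R \<and> p \<in> R \<and> refined j R"
proof (induction j)
  case 0
  then show ?case using assms clopen_top unfolding refined_def by blast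
next
  case (Suc j)
  then obtain R where R: "clopenin E R" "p \<in> R" "refined j R" by blast
  define K where "K = (if p \<in> cl j then cl j else topspace E - cl j)"
  have cK: "clopenin E K" unfolding K_def using cl_clopen clopen_diff[OF clopen_top cl_clopen] by auto
  have pK: "p \<in> K" unfolding K_def using assms by auto
  have "refined (Suc j) (R \<inter> K)"
    unfolding refined_def
  proof (intro allI impI)
    fix i assume "i < Suc j"
    then have "i < j \<or> i = j" by auto
    then show "R \<inter> K \<subseteq> cl i \<or> R \<inter> K \<inter> cl i = {}"
    proof
      assume "i < j" then show ?thesis using R(3) unfolding refined_def by blast
    next
      assume "i = j" then show ?thesis unfolding K_def by auto
    qed
  qed
  then show ?case using clopen_Int[OF R(1) cK] R(2) pK by blast
qed

lemma valid_trn: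
  assumes "valid V W" "trn j V W V' W'"
  shows "valid V' W'"
proof -
  obtain \<phi> where \<phi>: "lph E EG V W \<phi>" "\<phi> ` V' = W'" using assms(2) unfolding trn_def by blast
  have Vs: "V \<subseteq> topspace E" "W \<subseteq> topspace E" using assms(1) clopen_sub unfolding valid_def by auto
  have V'V: "V' \<subseteq> V" using assms(2) unfolding trn_def by auto
  have "lph E EG V' (\<phi> ` V') \<phi>" by (rule lph_restrict[OF \<phi>(1) V'V Vs])
  then have l: "lph E EG V' W' \<phi>" using \<phi>(2) by simp
  have "clopenin E V'" "clopenin E W'" "z \<in> V'" using assms(2) unfolding trn_def by auto
  then show ?thesis using l unfolding valid_def by blast
qed

lemma Dset_sub: "Dset V W j \<subseteq> C"
  unfolding Dset_def by auto

lemma Dset_open: "openin (subtopology E C) (Dset V W j)"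
proof (cases "valid V W")
  case True
  have "openin E (topspace E - W)" using True unfolding valid_def clopenin_def by (simp add: openin_diff)
  moreover have "openin E (\<Union>{W'. \<exists>V'. trn j V W V' W'})"
    unfolding trn_def clopenin_def by (rule openin_Union) blast
  ultimately have "openin E ((topspace E - W) \<union> \<Union>{W'. \<exists>V'. trn j V W V' W'})" by auto
  then show ?thesis using True unfolding Dset_def by (simp add: openin_subtopology_Int2)
next
  case False
  then show ?thesis unfolding Dset_def using Cs by (simp add: openin_subtopology_refl)
qed

lemma dense_crit:
  assumes "D \<subseteq> C" "\<And>p N. p \<in> C \<Longrightarrow> openin E N \<Longrightarrow> p \<in> N \<Longrightarrow> \<exists>q\<in>D. q \<in> N"
  shows "(subtopology E C) closure_of D = C"
proof -
  have "C \<subseteq> E closure_of D"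
  proof
    fix p assume p: "p \<in> C"
    show "p \<in> E closure_of D" unfolding in_closure_of using p Cs assms(2) by blast
  qed
  then show ?thesis using assms(1) by (simp add: closure_of_subtopology Int_absorb1 Int_absorb2)
qed

lemma Dset_dense: "(subtopology E C) closure_of (Dset V W j) = C"
proof (cases "valid V W")
  case False
  have "C \<subseteq> E closure_of C" using Cs by (rule closure_of_subset)
  then show ?thesis unfolding Dset_def using False by (simp add: closure_of_subtopology Int_absorb1 Int_absorb2)
next
  case True
  then have cV: "clopenin E V" and cW: "clopenin E W" and zV: "z \<in> V" and ex\<theta>: "\<exists>\<theta>. lph E EG V W \<theta>"
    unfolding valid_def by auto
  obtain \<theta> where \<theta>: "lph E EG V W \<theta>" using ex\<theta> by blast
  have Vs: "V \<subseteq> topspace E" "W \<subseteq> topspace E" using cV cW clopen_sub by auto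
  have hm\<theta>: "homeomorphic_map (subtopology E V) (subtopology E W) \<theta>" using \<theta> unfolding lph_def by auto
  have \<theta>V: "\<theta> ` V = W" using homeomorphic_imp_surjective_map[OF hm\<theta>] Vs by (simp add: Int_absorb1)
  show ?thesis
  proof (rule dense_crit[OF Dset_sub])
    fix p N assume p: "p \<in> C" and N: "openin E N" "p \<in> N"
    show "\<exists>q\<in>Dset V W j. q \<in> N"
    proof (cases "p \<in> W")
      case False
      then have "p \<in> Dset V W j" using True p Cs unfolding Dset_def by auto
      then show ?thesis using N by blast
    next
      case pW: True
      have oNW: "openin E (N \<inter> W)" using N(1) cW unfolding clopenin_def by auto
      obtain q where q: "q \<in> end_orbit E EG z" "q \<in> C" "q \<in> N \<inter> W" using dens[OF p oNW] pW N(2) by blast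
      obtain q' where q': "q' \<in> V" "\<theta> q' = q" using \<theta>V q(3) by (metis IntD2 imageE)
      have "q \<in> end_orbit E EG q'" using loc_orbit[OF \<theta> cV cW q'(1)] q'(2) by simp
      then have "end_orbit E EG q = end_orbit E EG q'" using orbit_eq[OF EGc] q' Vs by blast
      moreover have "end_orbit E EG q = end_orbit E EG z" using orbit_eq[OF EGc q(1) zE] .
      ultimately have "q' \<in> end_orbit E EG z" using orbit_self[OF EGc, of q'] by simp
      then obtain g where g: "pair_homeo E EG g" "g z = q'" unfolding end_orbit_def by auto
      have "homeomorphic_map E E g" using g(1) unfolding pair_homeo_def by auto
      then have gt: "g ` topspace E = topspace E" by (rule homeomorphic_imp_surjective_map)
      have lg: "lph E EG (topspace E) (topspace E) g" by (rule lph_of_ph[OF g(1) gt subset_refl EGs])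
      obtain \<sigma> where \<sigma>: "pair_homeo E EG \<sigma>" "\<sigma> z = g z" "\<sigma> ` V = V"
        using swap_point[OF lg clopen_top clopen_top zE cV zV] g(2) q'(1) by auto
      have l\<sigma>: "lph E EG V V \<sigma>" using lph_of_ph[OF \<sigma>(1) \<sigma>(3) Vs(1) EGs] .
      define \<phi> where "\<phi> = \<theta> \<circ> \<sigma>"
      have l\<phi>: "lph E EG V W \<phi>" unfolding \<phi>_def using lph_comp[OF l\<sigma> \<theta>] .
      have \<phi>z: "\<phi> z = q" unfolding \<phi>_def using \<sigma>(2) g(2) q'(2) by simp
      have hm\<phi>: "homeomorphic_map (subtopology E V) (subtopology E W) \<phi>" using l\<phi> unfolding lph_def by auto
      have fc: "continuous_map (subtopology E V) (subtopology E W) \<phi>"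
        using hm\<phi> by (rule homeomorphic_imp_continuous_map)
      have \<phi>V: "\<phi> ` V = W" using homeomorphic_imp_surjective_map[OF hm\<phi>] Vs by (simp add: Int_absorb1)
      have qE: "q \<in> topspace E" using q Vs by auto
      obtain Rz where Rz: "clopenin E Rz" "z \<in> Rz" "refined j Rz" using refine_exists[OF zE] by blast
      obtain Rq where Rq: "clopenin E Rq" "q \<in> Rq" "refined j Rq" using refine_exists[OF qE] by blast
      obtain Nq where Nq: "clopenin E Nq" "q \<in> Nq" "Nq \<subseteq> N" using zb[OF N(1)] q(3) by blast
      define V' where "V' = V \<inter> Rz \<inter> {p\<in>V. \<phi> p \<in> Rq \<inter> Nq}"
      define W' where "W' = \<phi> ` V'"
      have cV': "clopenin E V'" unfolding V'_def
        using clopen_Int[OF clopen_Int[OF cV Rz(1)] pre_clopen[OF fc cV clopen_Int[OF Rq(1) Nq(1)]]] .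
      have V'V: "V' \<subseteq> V" unfolding V'_def by auto
      have cW': "clopenin E W'" unfolding W'_def using img_clopen[OF hm\<phi> cV cW cV' V'V] .
      have zV': "z \<in> V'" unfolding V'_def using zV Rz \<phi>z Rq Nq by auto
      have W'W: "W' \<subseteq> W" unfolding W'_def using V'V \<phi>V by auto
      have "V' \<subseteq> Rz" unfolding V'_def by auto
      then have rV': "refined j V'" using refined_mono[OF Rz(3)] by blast
      have W'R: "W' \<subseteq> Rq \<inter> Nq" unfolding W'_def V'_def by auto
      have "W' \<subseteq> Rq" using W'R by auto
      then have rW': "refined j W'" using refined_mono[OF Rq(3)] by blast
      have "trn j V W V' W'" unfolding trn_def
        using cV' cW' zV' V'V W'W rV' rW' l\<phi> W'_def by blast
      moreover have "q \<in> W'" unfolding W'_def using zV' \<phi>z by force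
      ultimately have "q \<in> \<Union>{W'. \<exists>V'. trn j V W V' W'}" by blast
      then have "q \<in> Dset V W j" using True q(2) unfolding Dset_def by simp
      then show ?thesis using W'R Nq(3) \<open>q \<in> W'\<close> by blast
    qed
  qed
qed

end



lemma dec_le: "(\<And>k. X (Suc k) \<subseteq> X k) \<Longrightarrow> k \<le> m \<Longrightarrow> X m \<subseteq> X k"
  by (rule lift_Suc_antimono_le[of X]) auto

lemma annulus_ex:
  assumes "\<And>k. X (Suc k) \<subseteq> X k" "p \<in> X 0" "\<exists>k. p \<notin> X k"
  shows "\<exists>k. p \<in> X k \<and> p \<notin> X (Suc k)"
proof -
  define m where "m = (LEAST m. p \<notin> X m)"
  have m: "p \<notin> X m" unfolding m_def using assms(3) by (rule LeastI_ex)
  then have "m \<noteq> 0" using assms(2) by (cases m) auto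
  then obtain k where k: "m = Suc k" by (cases m) auto
  have "p \<in> X k" using not_less_Least[of k "\<lambda>m. p \<notin> X m"] k unfolding m_def by auto
  then show ?thesis using m k by auto
qed

lemma annulus_le:
  assumes "\<And>k. X (Suc k) \<subseteq> X k" "p \<in> X m" "p \<notin> X (Suc k)"
  shows "m \<le> k"
proof (rule ccontr)
  assume "\<not> m \<le> k"
  then have "Suc k \<le> m" by auto
  then have "X m \<subseteq> X (Suc k)" using dec_le[of X] assms(1) by blast
  then show False using assms(2,3) by auto
qed

lemma annulus_uniq:
  assumes "\<And>k. X (Suc k) \<subseteq> X k" "p \<in> X k" "p \<notin> X (Suc k)" "p \<in> X k'" "p \<notin> X (Suc k')"
  shows "k = k'"
  using annulus_le[of X p k k'] annulus_le[of X p k' k] assms by fastforce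

lemma lph_facts:
  assumes "lph E EG V W f" "V \<subseteq> topspace E" "W \<subseteq> topspace E"
  shows "f ` V = W" "inj_on f V" "continuous_map (subtopology E V) (subtopology E W) f"
proof -
  have hm: "homeomorphic_map (subtopology E V) (subtopology E W) f" using assms(1) unfolding lph_def by auto
  show "f ` V = W" using homeomorphic_imp_surjective_map[OF hm] assms(2,3) by (simp add: Int_absorb1)
  show "inj_on f V" using homeomorphic_imp_injective_map[OF hm] assms(2) by (simp add: Int_absorb1)
  show "continuous_map (subtopology E V) (subtopology E W) f" using hm by (rule homeomorphic_imp_continuous_map)
qed

context EZ
begin

lemma shrink:
  assumes "\<And>k. refined (Suc k) (X (Suc k))" "\<And>k. c \<in> X k" "openin E Op" "c \<in> Op"
  shows "\<exists>k. X (Suc k) \<subseteq> Op"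
proof -
  obtain U where U: "clopenin E U" "c \<in> U" "U \<subseteq> Op" using zb[OF assms(3,4)] by blast
  obtain i where i: "cl i = U" using cl_all[OF U(1)] by blast
  have "X (Suc i) \<subseteq> cl i \<or> X (Suc i) \<inter> cl i = {}" using assms(1)[of i] unfolding refined_def by auto
  then have "X (Suc i) \<subseteq> U" using assms(2)[of "Suc i"] U(2) i by auto
  then show ?thesis using U(3) by blast
qed

lemma sep_open:
  assumes "p \<in> topspace E" shows "openin E (topspace E - {p})"
proof -
  have "t1_space E" using hd by (rule Hausdorff_imp_t1_space)
  then have "\<forall>x\<in>topspace E. closedin E {x}" by (simp only: t1_space_closedin_singleton)
  then have "closedin E {p}" using assms by blast
  then show ?thesis by (simp add: openin_diff)
qed

lemma generic:
  assumes yC: "y \<in> C" and gen: "\<And>V W j. clopenin E V \<Longrightarrow> clopenin E W \<Longrightarrow> y \<in> Dset V W j"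
  shows "y \<in> end_orbit E EG z"
proof -
  have yE: "y \<in> topspace E" using yC Cs by auto
  define nxt where "nxt = (\<lambda>(s :: 'a set \<times> 'a set) j. SOME s'. trn j (fst s) (snd s) (fst s') (snd s') \<and> y \<in> snd s')"
  define st where "st = rec_nat (topspace E, topspace E) (\<lambda>k s. nxt s (Suc k))"
  define V where "V = (\<lambda>k. fst (st k))"
  define W where "W = (\<lambda>k. snd (st k))"
  have st0: "st 0 = (topspace E, topspace E)" unfolding st_def by simp
  have stS: "\<And>k. st (Suc k) = nxt (st k) (Suc k)" unfolding st_def by simp
  have V0: "V 0 = topspace E" and W0: "W 0 = topspace E" unfolding V_def W_def st0 by auto
  have step: "trn (Suc k) (V k) (W k) (V (Suc k)) (W (Suc k)) \<and> y \<in> W (Suc k)"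
    if vk: "valid (V k) (W k)" "y \<in> W k" for k
  proof -
    have "y \<in> Dset (V k) (W k) (Suc k)" using gen vk unfolding valid_def by auto
    then have "y \<in> \<Union>{W'. \<exists>V'. trn (Suc k) (V k) (W k) V' W'}" using vk unfolding Dset_def by auto
    then obtain V' W' where "trn (Suc k) (V k) (W k) V' W'" "y \<in> W'" by blast
    then have "trn (Suc k) (fst (st k)) (snd (st k)) (fst (V', W')) (snd (V', W')) \<and> y \<in> snd (V', W')"
      unfolding V_def W_def by simp
    then have "\<exists>s'. trn (Suc k) (fst (st k)) (snd (st k)) (fst s') (snd s') \<and> y \<in> snd s'"
      by blast
    then have "(\<lambda>s'. trn (Suc k) (fst (st k)) (snd (st k)) (fst s') (snd s') \<and> y \<in> snd s')
       (SOME s'. trn (Suc k) (fst (st k)) (snd (st k)) (fst s') (snd s') \<and> y \<in> snd s')"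
      by (rule someI_ex)
    moreover have "st (Suc k) = (SOME s'. trn (Suc k) (fst (st k)) (snd (st k)) (fst s') (snd s') \<and> y \<in> snd s')"
      unfolding stS nxt_def by simp
    ultimately have "trn (Suc k) (fst (st k)) (snd (st k)) (fst (st (Suc k))) (snd (st (Suc k))) \<and> y \<in> snd (st (Suc k))"
      by simp
    then show ?thesis unfolding V_def W_def by simp
  qed
  have inv: "valid (V k) (W k) \<and> y \<in> W k" for k
  proof (induction k)
    case 0
    have "lph E EG (topspace E) (topspace E) id" by (rule lph_id)
    then show ?case unfolding V0 W0 valid_def using clopen_top zE yE by blast
  next
    case (Suc k)
    then have "trn (Suc k) (V k) (W k) (V (Suc k)) (W (Suc k)) \<and> y \<in> W (Suc k)" using step by blast
    then show ?case using valid_trn Suc by blast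
  qed
  have TR: "trn (Suc k) (V k) (W k) (V (Suc k)) (W (Suc k))" for k using step inv by blast
  have decV: "V (Suc k) \<subseteq> V k" and decW: "W (Suc k) \<subseteq> W k" for k using TR[of k] unfolding trn_def by auto
  have zV: "z \<in> V k" for k using inv[of k] unfolding valid_def by auto
  have yW: "y \<in> W k" for k using inv[of k] by auto
  have cV: "clopenin E (V k)" and cW: "clopenin E (W k)" for k using inv[of k] unfolding valid_def by auto
  have Vs: "V k \<subseteq> topspace E" and Ws: "W k \<subseteq> topspace E" for k using clopen_sub[OF cV[of k]] clopen_sub[OF cW[of k]] by auto
  have rV: "refined (Suc k) (V (Suc k))" and rW: "refined (Suc k) (W (Suc k))" for k
    using TR[of k] unfolding trn_def by auto
  define \<phi> where "\<phi> = (\<lambda>k. SOME f. lph E EG (V k) (W k) f \<and> f ` V (Suc k) = W (Suc k))"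
  have \<phi>: "lph E EG (V k) (W k) (\<phi> k) \<and> \<phi> k ` V (Suc k) = W (Suc k)" for k
  proof -
    have "\<exists>f. lph E EG (V k) (W k) f \<and> f ` V (Suc k) = W (Suc k)" using TR[of k] unfolding trn_def by blast
    then show ?thesis unfolding \<phi>_def by (rule someI_ex)
  qed
  have \<phi>l: "lph E EG (V k) (W k) (\<phi> k)" and \<phi>S: "\<phi> k ` V (Suc k) = W (Suc k)" for k using \<phi> by auto
  have \<phi>V: "\<phi> k ` V k = W k" and \<phi>i: "inj_on (\<phi> k) (V k)"
    and \<phi>c: "continuous_map (subtopology E (V k)) (subtopology E (W k)) (\<phi> k)" for k
    using lph_facts[OF \<phi>l Vs Ws] by auto
  have Vout: "\<exists>k. p \<notin> V k" if pz: "p \<in> topspace E" "p \<noteq> z" for p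
  proof -
    obtain k where "V (Suc k) \<subseteq> topspace E - {p}" using shrink[OF rV zV sep_open[OF pz(1)]] pz zE by auto
    then show ?thesis by blast
  qed
  have Wout: "\<exists>k. q \<notin> W k" if qy: "q \<in> topspace E" "q \<noteq> y" for q
  proof -
    obtain k where "W (Suc k) \<subseteq> topspace E - {q}" using shrink[OF rW yW sep_open[OF qy(1)]] qy yE by auto
    then show ?thesis by blast
  qed
  define lev where "lev = (\<lambda>p. THE k. p \<in> V k \<and> p \<notin> V (Suc k))"
  have lev: "p \<in> V (lev p) \<and> p \<notin> V (Suc (lev p))" if pz: "p \<in> topspace E" "p \<noteq> z" for p
  proof -
    have "p \<in> V 0" using V0 pz by simp
    then obtain k where k: "p \<in> V k" "p \<notin> V (Suc k)" using annulus_ex[of V p, OF decV _ Vout[OF pz]] by blast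
    have "lev p = k" unfolding lev_def
    proof (rule the_equality)
      show "p \<in> V k \<and> p \<notin> V (Suc k)" using k by simp
      fix k' assume "p \<in> V k' \<and> p \<notin> V (Suc k')"
      then show "k' = k" using annulus_uniq[of V p k' k, OF decV] k by blast
    qed
    then show ?thesis using k by simp
  qed
  have lev_uniq: "lev p = k" if "p \<in> V k" "p \<notin> V (Suc k)" for p k
  proof -
    have "p \<in> topspace E" using that Vs by auto
    moreover have "p \<noteq> z" using that zV by auto
    ultimately have "p \<in> V (lev p) \<and> p \<notin> V (Suc (lev p))" using lev by blast
    then show ?thesis using annulus_uniq[of V p "lev p" k, OF decV] that by blast
  qed
  define \<psi> where "\<psi> = (\<lambda>p. if p = z then y else \<phi> (lev p) p)"
  have \<psi>out: "\<psi> p = \<phi> (lev p) p \<and> \<psi> p \<in> W (lev p) \<and> \<psi> p \<notin> W (Suc (lev p))"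
    if "p \<in> topspace E" "p \<noteq> z" for p
  proof -
    let ?k = "lev p"
    have a: "p \<in> V ?k" "p \<notin> V (Suc ?k)" using lev that by auto
    have "\<phi> ?k p \<in> W ?k" using a \<phi>V by blast
    moreover have "\<phi> ?k p \<notin> W (Suc ?k)"
    proof
      assume "\<phi> ?k p \<in> W (Suc ?k)"
      then obtain p' where p': "p' \<in> V (Suc ?k)" "\<phi> ?k p' = \<phi> ?k p" using \<phi>S by (metis imageE)
      have "p' \<in> V ?k" using p' decV by auto
      then have "p' = p" using \<phi>i[of ?k] p' a unfolding inj_on_def by auto
      then show False using p' a by auto
    qed
    ultimately show ?thesis unfolding \<psi>_def using that by auto
  qed
  have \<psi>top: "\<psi> p \<in> topspace E" if "p \<in> topspace E" for p
    using \<psi>out[OF that] Ws yE unfolding \<psi>_def by (cases "p = z") auto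
  have surj: "\<psi> ` topspace E = topspace E"
  proof
    show "\<psi> ` topspace E \<subseteq> topspace E" using \<psi>top by auto
    show "topspace E \<subseteq> \<psi> ` topspace E"
    proof
      fix q assume q: "q \<in> topspace E"
      show "q \<in> \<psi> ` topspace E"
      proof (cases "q = y")
        case True
        then have "\<psi> z = q" unfolding \<psi>_def by simp
        then show ?thesis using zE by blast
      next
        case False
        have "q \<in> W 0" using W0 q by simp
        then obtain k where k: "q \<in> W k" "q \<notin> W (Suc k)" using annulus_ex[of W q, OF decW _ Wout[OF q False]] by blast
        obtain p where p: "p \<in> V k" "\<phi> k p = q" using \<phi>V k(1) by (metis imageE)
        have pS: "p \<notin> V (Suc k)" using p k(2) \<phi>S by blast
        have "p \<noteq> z" using pS zV by auto
        moreover have "lev p = k" using lev_uniq p(1) pS by blast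
        moreover have "p \<in> topspace E" using p Vs by auto
        ultimately have "\<psi> p = q" using \<psi>out p by auto
        then show ?thesis using \<open>p \<in> topspace E\<close> by blast
      qed
    qed
  qed
  have inj: "inj_on \<psi> (topspace E)"
  proof (rule inj_onI)
    fix p1 p2 assume p: "p1 \<in> topspace E" "p2 \<in> topspace E" "\<psi> p1 = \<psi> p2"
    have ne: "\<psi> p \<noteq> y" if "p \<in> topspace E" "p \<noteq> z" for p
      using \<psi>out[OF that] yW by auto
    show "p1 = p2"
    proof (cases "p1 = z \<or> p2 = z")
      case True
      then show ?thesis using ne p unfolding \<psi>_def by (metis)
    next
      case False
      then have n1: "p1 \<noteq> z" and n2: "p2 \<noteq> z" by auto
      have o1: "\<psi> p1 \<in> W (lev p1)" "\<psi> p1 \<notin> W (Suc (lev p1))" and e1: "\<psi> p1 = \<phi> (lev p1) p1"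
        using \<psi>out[OF p(1) n1] by auto
      have o2: "\<psi> p1 \<in> W (lev p2)" "\<psi> p1 \<notin> W (Suc (lev p2))" and e2: "\<psi> p2 = \<phi> (lev p2) p2"
        using \<psi>out[OF p(2) n2] p(3) by auto
      have "lev p1 = lev p2" using annulus_uniq[of W "\<psi> p1" "lev p1" "lev p2", OF decW o1 o2] .
      moreover have "p1 \<in> V (lev p1)" "p2 \<in> V (lev p2)" using lev p False by auto
      ultimately show ?thesis using \<phi>i[of "lev p1"] e1 e2 p(3) unfolding inj_on_def by auto
    qed
  qed
  have cont: "continuous_map E E \<psi>"
    unfolding continuous_map
  proof (intro conjI allI impI)
    show "\<psi> ` topspace E \<subseteq> topspace E" using surj by simp
    fix Op assume oO: "openin E Op"
    show "openin E {p \<in> topspace E. \<psi> p \<in> Op}"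
      unfolding openin_subopen[of E "{p \<in> topspace E. \<psi> p \<in> Op}"]
    proof
      fix p assume p: "p \<in> {p \<in> topspace E. \<psi> p \<in> Op}"
      show "\<exists>T. openin E T \<and> p \<in> T \<and> T \<subseteq> {p \<in> topspace E. \<psi> p \<in> Op}"
      proof (cases "p = z")
        case True
        then have "y \<in> Op" using p unfolding \<psi>_def by auto
        then obtain k where k: "W (Suc k) \<subseteq> Op" using shrink[OF rW yW oO] by blast
        have "V (Suc k) \<subseteq> {p \<in> topspace E. \<psi> p \<in> Op}"
        proof
          fix p' assume p': "p' \<in> V (Suc k)"
          have p'E: "p' \<in> topspace E" using p' Vs by auto
          show "p' \<in> {p \<in> topspace E. \<psi> p \<in> Op}"
          proof (cases "p' = z")
            case True then show ?thesis using \<open>y \<in> Op\<close> p'E unfolding \<psi>_def by auto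
          next
            case False
            have "Suc k \<le> lev p'" using annulus_le[of V p' "Suc k" "lev p'"] decV p' lev[OF p'E False] by auto
            then have "W (lev p') \<subseteq> W (Suc k)" using dec_le[of W] decW by blast
            then show ?thesis using \<psi>out[OF p'E False] k p'E by auto
          qed
        qed
        moreover have "openin E (V (Suc k))" using cV unfolding clopenin_def by auto
        ultimately show ?thesis using True zV by blast
      next
        case False
        have pE: "p \<in> topspace E" using p by auto
        let ?k = "lev p"
        define T where "T = {p' \<in> V ?k. \<phi> ?k p' \<in> Op} \<inter> (topspace E - V (Suc ?k))"
        have "openin E {p' \<in> V ?k. \<phi> ?k p' \<in> Op}" using pre_open[OF \<phi>c _ oO] cV unfolding clopenin_def by auto
        moreover have "openin E (topspace E - V (Suc ?k))" using cV unfolding clopenin_def by (simp add: openin_diff)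
        ultimately have oT: "openin E T" unfolding T_def by auto
        have "p \<in> T" using lev[OF pE False] \<psi>out[OF pE False] p pE unfolding T_def by auto
        moreover have "T \<subseteq> {p \<in> topspace E. \<psi> p \<in> Op}"
        proof
          fix p' assume p': "p' \<in> T"
          then have a: "p' \<in> V ?k" "p' \<notin> V (Suc ?k)" "\<phi> ?k p' \<in> Op" "p' \<in> topspace E" unfolding T_def by auto
          have "p' \<noteq> z" using a zV by auto
          moreover have "lev p' = ?k" using lev_uniq a by blast
          ultimately show "p' \<in> {p \<in> topspace E. \<psi> p \<in> Op}" using a unfolding \<psi>_def by auto
        qed
        ultimately show ?thesis using oT by blast
      qed
    qed
  qed
  have hom: "homeomorphic_map E E \<psi>"
    by (rule continuous_imp_homeomorphic_map[OF cont cpt hd surj inj])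
  have zy: "z \<in> EG \<longleftrightarrow> y \<in> EG"
  proof
    assume zG: "z \<in> EG"
    show "y \<in> EG"
    proof (rule ccontr)
      assume "y \<notin> EG"
      then have "y \<in> topspace E - EG" using yE by auto
      moreover have "openin E (topspace E - EG)" using EGc by (simp add: openin_diff)
      ultimately obtain q where q: "q \<in> end_orbit E EG z" "q \<in> topspace E - EG" using dens[OF yC] by blast
      then obtain h where "pair_homeo E EG h" "q = h z" unfolding end_orbit_def by auto
      then have "q \<in> EG" using zG unfolding pair_homeo_def by auto
      then show False using q by auto
    qed
  next
    assume yG: "y \<in> EG"
    show "z \<in> EG"
    proof (rule ccontr)
      assume "z \<notin> EG"
      then have "z \<in> topspace E - EG" using zE by auto
      moreover have "openin E (topspace E - EG)" using EGc by (simp add: openin_diff)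
      ultimately obtain k where k: "V (Suc k) \<subseteq> topspace E - EG" using shrink[OF rV zV] by blast
      obtain p where p: "p \<in> V (Suc k)" "\<phi> k p = y" using \<phi>S[of k] yW[of "Suc k"] by (metis imageE)
      have "p \<in> V k" using p decV by auto
      then have "p \<in> EG" using lph_EG_iff[OF \<phi>l \<open>p \<in> V k\<close> Vs Ws] p yG by auto
      then show False using k p by auto
    qed
  qed
  have \<psi>EG: "\<psi> p \<in> EG \<longleftrightarrow> p \<in> EG" if "p \<in> topspace E" for p
  proof (cases "p = z")
    case True then show ?thesis using zy unfolding \<psi>_def by auto
  next
    case False
    have "p \<in> V (lev p)" using lev that False by auto
    then show ?thesis using \<psi>out[OF that False] lph_EG_iff[OF \<phi>l _ Vs Ws] by auto
  qed
  have "\<psi> ` EG = EG"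
  proof
    show "\<psi> ` EG \<subseteq> EG" using \<psi>EG EGs by auto
    show "EG \<subseteq> \<psi> ` EG"
    proof
      fix q assume q: "q \<in> EG"
      then obtain p where p: "p \<in> topspace E" "\<psi> p = q" using surj EGs by (metis imageE subsetD)
      then have "p \<in> EG" using \<psi>EG q by auto
      then show "q \<in> \<psi> ` EG" using p by blast
    qed
  qed
  then have "pair_homeo E EG \<psi>" using hom unfolding pair_homeo_def by auto
  moreover have "\<psi> z = y" unfolding \<psi>_def by simp
  ultimately have "\<exists>h. y = h z \<and> pair_homeo E EG h" by metis
  then show ?thesis unfolding end_orbit_def by simp
qed

end



lemma comeager_meet:
  assumes "comeager_in X A" "comeager_in X B" "locally_compact_space X" "regular_space X" "topspace X \<noteq> {}"
  shows "A \<inter> B \<noteq> {}"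
proof -
  obtain D :: "nat \<Rightarrow> 'a set" where D: "\<forall>n. openin X (D n) \<and> X closure_of (D n) = topspace X" "(\<Inter>n. D n) \<subseteq> A"
    using assms(1) unfolding comeager_in_def by (elim exE) auto
  obtain D' :: "nat \<Rightarrow> 'a set" where D': "\<forall>n. openin X (D' n) \<and> X closure_of (D' n) = topspace X" "(\<Inter>n. D' n) \<subseteq> B"
    using assms(2) unfolding comeager_in_def by (elim exE) auto
  let ?G = "range D \<union> range D'"
  have "countable ?G" by simp
  moreover have "\<And>T. T \<in> ?G \<Longrightarrow> openin X T \<and> X closure_of T = topspace X" using D D' by auto
  ultimately have cl: "X closure_of \<Inter>?G = topspace X" using Baire_category assms(3,4) by blast
  have "\<Inter>?G \<noteq> {}"
  proof
    assume "\<Inter>?G = {}"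
    then have "X closure_of \<Inter>?G = {}" by simp
    then show False using cl assms(5) by simp
  qed
  then obtain y where y: "y \<in> \<Inter>?G" by blast
  then have "y \<in> (\<Inter>n. D n)" "y \<in> (\<Inter>n. D' n)" by auto
  then show ?thesis using D(2) D'(2) by blast
qed

theorem mainTheorem3:
  fixes E :: "'a topology" and EG :: "'a set" and x :: 'a
  assumes "end_space_pair E EG"
    and "x \<in> topspace E"
    and "C = E closure_of (H_set E EG x)"
    and "\<forall>y\<in>C. y \<in> E closure_of (C - {y})"
  shows "(\<forall>z\<in>C. (subtopology E C) closure_of (end_orbit E EG z) = C
             \<longrightarrow> comeager_in (subtopology E C) (end_orbit E EG z))
         \<and> (\<forall>z\<in>C. \<forall>z'\<in>C. (subtopology E C) closure_of (end_orbit E EG z) = C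
             \<and> (subtopology E C) closure_of (end_orbit E EG z') = C
             \<longrightarrow> end_orbit E EG z = end_orbit E EG z')"
proof -
  have cpt: "compact_space E" and mz: "metrizable_space E"
    and comp: "\<forall>x\<in>topspace E. connected_component_of_set E x = {x}" and EGc: "closedin E EG"
    using assms(1) unfolding end_space_pair_def by auto
  have hd: "Hausdorff_space E" using mz by (rule metrizable_imp_Hausdorff_space)
  have zb: "\<exists>U. clopenin E U \<and> x \<in> U \<and> U \<subseteq> Op" if "openin E Op" "x \<in> Op" for Op x
    using clopen_base[OF cpt hd comp that] .
  interpret EB E EG using cpt hd EGc zb by unfold_locales auto
  have ctb: "countable {U. clopenin E U}"
    using countable_clopens[OF cpt compact_metrizable_second_countable[OF cpt mz]] .
  have ne: "{U. clopenin E U} \<noteq> {}" using clopen_top by blast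
  define cl where "cl = from_nat_into {U. clopenin E U}"
  have rng: "range cl = {U. clopenin E U}" unfolding cl_def using range_from_nat_into[OF ne ctb] .
  have cl_clopen: "clopenin E (cl i)" for i using rng by blast
  have cl_all: "\<exists>i. cl i = U" if "clopenin E U" for U
  proof -
    have "U \<in> range cl" using rng that by blast
    then show ?thesis by auto
  qed
  have Cs: "C \<subseteq> topspace E" unfolding assms(3) by (rule closure_of_subset_topspace)
  have topC: "topspace (subtopology E C) = C" using Cs by auto
  have part1: "comeager_in (subtopology E C) (end_orbit E EG z)"
    if zC: "z \<in> C" and dz: "(subtopology E C) closure_of (end_orbit E EG z) = C" for z
  proof -
    have dens: "\<exists>q. q \<in> end_orbit E EG z \<and> q \<in> C \<and> q \<in> N" if "p \<in> C" "openin E N" "p \<in> N" for p N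
    proof -
      have "p \<in> C \<inter> E closure_of (C \<inter> end_orbit E EG z)"
        using that(1) dz by (simp add: closure_of_subtopology)
      then have "p \<in> E closure_of (C \<inter> end_orbit E EG z)" by blast
      then show ?thesis unfolding in_closure_of using that(2,3) by blast
    qed
    interpret EZ E EG cl z C
      using cl_clopen cl_all zC Cs dens by unfold_locales auto
    define D where "D = (\<lambda>n. case prod_decode n of (a, r) \<Rightarrow> (case prod_decode r of (b, j) \<Rightarrow> Dset (cl a) (cl b) j))"
    have Dn: "\<exists>V W j. D n = Dset V W j" for n
      unfolding D_def by (auto split: prod.split)
    have "openin (subtopology E C) (D n) \<and> (subtopology E C) closure_of (D n) = topspace (subtopology E C)" for n
      using Dn[of n] Dset_open Dset_dense topC by auto
    moreover have "(\<Inter>n. D n) \<subseteq> end_orbit E EG z"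
    proof
      fix y assume y: "y \<in> (\<Inter>n. D n)"
      obtain V0 W0 j0 where "D 0 = Dset V0 W0 j0" using Dn[of 0] by blast
      moreover have "y \<in> D 0" using y by blast
      ultimately have yC: "y \<in> C" using Dset_sub[of V0 W0 j0] by auto
      have "y \<in> Dset V W j" if cVW: "clopenin E V" "clopenin E W" for V W j
      proof -
        obtain a where a: "cl a = V" using cl_all[OF cVW(1)] by blast
        obtain b where b: "cl b = W" using cl_all[OF cVW(2)] by blast
        have ab: "cl a = V" "cl b = W" using a b by auto
        have "D (prod_encode (a, prod_encode (b, j))) = Dset V W j"
          unfolding D_def using ab by simp
        moreover have "y \<in> D (prod_encode (a, prod_encode (b, j)))" using y by blast
        ultimately show ?thesis by simp
      qed
      then show "y \<in> end_orbit E EG z" using generic[OF yC] by blast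
    qed
    ultimately show ?thesis unfolding comeager_in_def by blast
  qed
  have part2: "end_orbit E EG z = end_orbit E EG z'"
    if zC: "z \<in> C" "z' \<in> C" and dz: "(subtopology E C) closure_of (end_orbit E EG z) = C"
      "(subtopology E C) closure_of (end_orbit E EG z') = C" for z z'
  proof -
    have cC: "compactin E C" using assms(3) cpt closedin_compact_space closedin_closure_of by metis
    have cs: "compact_space (subtopology E C)" using cC by (rule compact_space_subtopology)
    have hs: "Hausdorff_space (subtopology E C)" using hd by (rule Hausdorff_space_subtopology)
    have "end_orbit E EG z \<inter> end_orbit E EG z' \<noteq> {}"
      using comeager_meet[OF part1[OF zC(1) dz(1)] part1[OF zC(2) dz(2)]
          compact_imp_locally_compact_space[OF cs] compact_Hausdorff_imp_regular_space[OF cs hs]] topC zC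
      by auto
    then obtain y where y: "y \<in> end_orbit E EG z" "y \<in> end_orbit E EG z'" by blast
    have "z \<in> topspace E" "z' \<in> topspace E" using zC Cs by auto
    then show ?thesis using orbit_eq[OF EGc y(1)] orbit_eq[OF EGc y(2)] by simp
  qed
  show ?thesis using part1 part2 by blast
qed


end
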